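(* In the setting below, the function $f\mapsto \mathcal L(f)$ is concave on $[0,\infty)^{n\times p}$.
   Context: Let $M=(m_{ij})\in\{0,1\}^{n\times p}$, $m_i=\sum_jm_{ij}\ge1$ for all $i$, $m=\sum_im_i$, and fix constants $\hat\sigma_{1,j}>0$ ($j=1,\dots,p$), $\hat\sigma_2>0$. For $0<b<c$ and $q_1,q_2>0$ with $q_1\tanh(q_2(c-b))=b$, let $d=b^2/2+(q_1/q_2)\ln\cosh(q_2(c-b))$ and define $\rho_{b,c}(z)=z^2/2$ if $|z|\le b$, $\rho_{b,c}(z)=d-(q_1/q_2)\ln\cosh(q_2(c-|z|))$ if $b\le|z|\le c$, $\rho_{b,c}(z)=d$ if $|z|\ge c$. Let $\rho_1=\rho_{b_1,c_1}$, $\rho_2=\rho_{b_2,c_2}$ (each with its own admissible constants) and $h_k(z)=\rho_k(\sqrt z)$ for $z\ge0$. For $f=(f_{ij})\in[0,\infty)^{n\times p}$ define $$\mathcal L(f)=\frac{\hat\sigma_2^2}{m}\sum_{i=1}^n m_i\,h_2\!\Big(\frac{1}{m_i\hat\sigma_2^2}\sum_{j=1}^p m_{ij}\hat\sigma_{1,j}^2\,h_1\big(f_{ij}/\hat\sigma_{1,j}^2\big)\Big).$$ (With $f_{ij}=r_{ij}^2$ this is the cellPCA objective $\frac{\hat\sigma_2^2}{m}\sum_i m_i\rho_2(\mathrm{rt}_i/\hat\sigma_2)$, $\mathrm{rt}_i=\sqrt{\frac1{m_i}\sum_jm_{ij}\hat\sigma_{1,j}^2\rho_1(r_{ij}/\hat\sigma_{1,j})}$.)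 *)

theory Defs
  imports "HOL-Analysis.Analysis"
begin

definition rho_admissible :: "real \<Rightarrow> real \<Rightarrow> real \<Rightarrow> real \<Rightarrow> bool" where
  "rho_admissible b c q1 q2 \<longleftrightarrow>
     0 < b \<and> b < c \<and> 0 < q1 \<and> 0 < q2 \<and> q1 * tanh (q2 * (c - b)) = b"

definition rho_d :: "real \<Rightarrow> real \<Rightarrow> real \<Rightarrow> real \<Rightarrow> real" where
  "rho_d b c q1 q2 = b\<^sup>2 / 2 + (q1 / q2) * ln (cosh (q2 * (c - b)))"

definition rho :: "real \<Rightarrow> real \<Rightarrow> real \<Rightarrow> real \<Rightarrow> real \<Rightarrow> real" where
  "rho b c q1 q2 z =
     (if \<bar>z\<bar> \<le> b then z\<^sup>2 / 2
      else if \<bar>z\<bar> \<le> c then rho_d b c q1 q2 - (q1 / q2) * ln (cosh (q2 * (c - \<bar>z\<bar>)))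
      else rho_d b c q1 q2)"

definition hfun :: "real \<Rightarrow> real \<Rightarrow> real \<Rightarrow> real \<Rightarrow> real \<Rightarrow> real" where
  "hfun b c q1 q2 z = rho b c q1 q2 (sqrt z)"

definition cellL ::
  "(real \<Rightarrow> real) \<Rightarrow> (real \<Rightarrow> real) \<Rightarrow> real^'p^'n \<Rightarrow> ('p \<Rightarrow> real) \<Rightarrow> real
     \<Rightarrow> real^'p^'n \<Rightarrow> real" where
  "cellL h1 h2 M s1 s2 f =
     (let mi = (\<lambda>i. \<Sum>j\<in>UNIV. M $ i $ j);
          m = (\<Sum>i\<in>UNIV. mi i)
      in s2\<^sup>2 / m * (\<Sum>i\<in>UNIV. mi i *
            h2 (1 / (mi i * s2\<^sup>2) * (\<Sum>j\<in>UNIV. M $ i $ j * (s1 j)\<^sup>2 * h1 (f $ i $ j / (s1 j)\<^sup>2)))))"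

end

theory Submission imports Defs begin
lemma evl: "eventually (\<lambda>y. y < (a::real)) (at_left a)"
  unfolding eventually_at_filter by simp
lemma glue:
  fixes g1 g2 :: "real \<Rightarrow> real"
  assumes d1: "(g1 has_real_derivative D) (at a)" and d2: "(g2 has_real_derivative D) (at a)"
    and eq: "g1 a = g2 a"
  shows "((\<lambda>x. if x \<le> a then g1 x else g2 x) has_real_derivative D) (at a)"
proof -
  let ?F = "\<lambda>x. if x \<le> a then g1 x else g2 x"
  have t1: "((\<lambda>y. (g1 y - g1 a) / (y - a)) \<longlongrightarrow> D) (at a)"
    using d1 unfolding has_field_derivative_iff by simp
  have t2: "((\<lambda>y. (g2 y - g2 a) / (y - a)) \<longlongrightarrow> D) (at a)"
    using d2 unfolding has_field_derivative_iff by simp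
  have l: "((\<lambda>y. (?F y - ?F a) / (y - a)) \<longlongrightarrow> D) (at_left a)"
  proof -
    have "((\<lambda>y. (g1 y - g1 a) / (y - a)) \<longlongrightarrow> D) (at_left a)"
      using t1 filterlim_at_split by blast
    moreover have "eventually (\<lambda>y. (g1 y - g1 a) / (y - a) = (?F y - ?F a) / (y - a)) (at_left a)"
      using evl[of a] by (rule eventually_mono) simp
    ultimately show ?thesis by (rule Lim_transform_eventually)
  qed
  have r: "((\<lambda>y. (?F y - ?F a) / (y - a)) \<longlongrightarrow> D) (at_right a)"
  proof -
    have "((\<lambda>y. (g2 y - g2 a) / (y - a)) \<longlongrightarrow> D) (at_right a)"
      using t2 filterlim_at_split by blast
    moreover have "eventually (\<lambda>y. (g2 y - g2 a) / (y - a) = (?F y - ?F a) / (y - a)) (at_right a)"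
      using eventually_at_right_less[of a] by (rule eventually_mono) (simp add: eq)
    ultimately show ?thesis by (rule Lim_transform_eventually)
  qed
  show ?thesis unfolding has_field_derivative_iff using l r filterlim_at_split by blast
qed

definition "Pf b c q1 q2 z = rho_d b c q1 q2 - (q1/q2) * ln (cosh (q2*(c - sqrt z)))"
definition "Gf b c q1 q2 z = (if z \<le> c\<^sup>2 then Pf b c q1 q2 z else rho_d b c q1 q2)"
definition "Hf b c q1 q2 z = (if z \<le> b\<^sup>2 then z/2 else Gf b c q1 q2 z)"
definition "Pd c q1 q2 z = q1 * tanh (q2*(c - sqrt z)) / (2 * sqrt z)"
definition "Gd c q1 q2 z = (if z \<le> c\<^sup>2 then Pd c q1 q2 z else 0)"
definition "Hd b c q1 q2 z = (if z \<le> b\<^sup>2 then 1/2 else Gd c q1 q2 z)"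

context
  fixes b c q1 q2 :: real
  assumes adm: "rho_admissible b c q1 q2"
begin

lemma admD: "0 < b" "b < c" "0 < q1" "0 < q2" "q1 * tanh (q2 * (c - b)) = b"
  using adm unfolding rho_admissible_def by auto

lemma Pf_deriv: "z > 0 \<Longrightarrow> (Pf b c q1 q2 has_real_derivative Pd c q1 q2 z) (at z)"
  unfolding Pf_def[abs_def] Pd_def using admD
  apply -
  apply (rule derivative_eq_intros refl | simp)+
  apply (simp add: tanh_def field_simps)
  done

lemma Pf_c: "Pf b c q1 q2 (c\<^sup>2) = rho_d b c q1 q2"
  using admD by (simp add: Pf_def)
lemma Pd_c: "Pd c q1 q2 (c\<^sup>2) = 0"
  using admD by (simp add: Pd_def)
lemma Pf_b: "Pf b c q1 q2 (b\<^sup>2) = b\<^sup>2/2"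
  using admD by (simp add: Pf_def rho_d_def)
lemma Pd_b: "Pd c q1 q2 (b\<^sup>2) = 1/2"
  using admD by (simp add: Pd_def)

lemma Gf_deriv: "z > 0 \<Longrightarrow> (Gf b c q1 q2 has_real_derivative Gd c q1 q2 z) (at z)"
proof -
  assume z: "z > 0"
  consider "z < c\<^sup>2" | "z = c\<^sup>2" | "z > c\<^sup>2" by linarith
  then show ?thesis
  proof cases
    case 1
    have "eventually (\<lambda>x. x < c\<^sup>2) (nhds z)"
      using eventually_nhds_in_open[of "{..<c\<^sup>2}" z] 1 by simp
    then have e: "eventually (\<lambda>x. Gf b c q1 q2 x = Pf b c q1 q2 x) (nhds z)"
      by (rule eventually_mono) (simp add: Gf_def)
    have v: "Gd c q1 q2 z = Pd c q1 q2 z" using 1 by (simp add: Gd_def)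
    show ?thesis by (rule DERIV_cong_ev[THEN iffD2, OF refl e v Pf_deriv[OF z]])
  next
    case 2
    have "((\<lambda>x. if x \<le> c\<^sup>2 then Pf b c q1 q2 x else rho_d b c q1 q2) has_real_derivative 0) (at (c\<^sup>2))"
      by (rule glue) (use Pf_deriv[of "c\<^sup>2"] admD Pd_c Pf_c in auto)
    then show ?thesis using 2 Pd_c by (simp add: Gf_def[abs_def] Gd_def)
  next
    case 3
    have "eventually (\<lambda>x. x > c\<^sup>2) (nhds z)"
      using eventually_nhds_in_open[of "{c\<^sup>2<..}" z] 3 by simp
    then have e: "eventually (\<lambda>x. Gf b c q1 q2 x = rho_d b c q1 q2) (nhds z)"
      by (rule eventually_mono) (simp add: Gf_def)
    have v: "Gd c q1 q2 z = 0" using 3 by (simp add: Gd_def)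
    have d: "((\<lambda>x. rho_d b c q1 q2) has_real_derivative 0) (at z)" by simp
    show ?thesis by (rule DERIV_cong_ev[THEN iffD2, OF refl e v d])
  qed
qed

lemma Hf_deriv: "(Hf b c q1 q2 has_real_derivative Hd b c q1 q2 z) (at z)"
proof -
  consider "z < b\<^sup>2" | "z = b\<^sup>2" | "z > b\<^sup>2" by linarith
  then show ?thesis
  proof cases
    case 1
    have "eventually (\<lambda>x. x < b\<^sup>2) (nhds z)"
      using eventually_nhds_in_open[of "{..<b\<^sup>2}" z] 1 by simp
    then have e: "eventually (\<lambda>x. Hf b c q1 q2 x = x/2) (nhds z)"
      by (rule eventually_mono) (simp add: Hf_def)
    have v: "Hd b c q1 q2 z = 1/2" using 1 by (simp add: Hd_def)
    have d: "((\<lambda>x. x/2) has_real_derivative 1/2) (at z)"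
      by (auto intro!: derivative_eq_intros)
    show ?thesis by (rule DERIV_cong_ev[THEN iffD2, OF refl e v d])
  next
    case 2
    have bc: "b\<^sup>2 < c\<^sup>2" by (rule power_strict_mono) (use admD in auto)
    have "b\<^sup>2 > 0" using admD by simp
    have "((\<lambda>x. if x \<le> b\<^sup>2 then x/2 else Gf b c q1 q2 x) has_real_derivative 1/2) (at (b\<^sup>2))"
    proof (rule glue)
      show "((\<lambda>x. x/2) has_real_derivative 1/2) (at (b\<^sup>2))"
        by (auto intro!: derivative_eq_intros)
      show "(Gf b c q1 q2 has_real_derivative 1/2) (at (b\<^sup>2))"
        using Gf_deriv[OF \<open>b\<^sup>2 > 0\<close>] bc Pd_b by (simp add: Gd_def)
      show "b\<^sup>2/2 = Gf b c q1 q2 (b\<^sup>2)" using bc Pf_b by (simp add: Gf_def)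
    qed
    then show ?thesis using 2 by (simp add: Hf_def[abs_def] Hd_def)
  next
    case 3
    have "eventually (\<lambda>x. x > b\<^sup>2) (nhds z)"
      using eventually_nhds_in_open[of "{b\<^sup>2<..}" z] 3 by simp
    then have e: "eventually (\<lambda>x. Hf b c q1 q2 x = Gf b c q1 q2 x) (nhds z)"
      by (rule eventually_mono) (simp add: Hf_def)
    have v: "Hd b c q1 q2 z = Gd c q1 q2 z" using 3 by (simp add: Hd_def)
    have z: "z > 0" using 3 by (smt (verit) zero_le_power2)
    show ?thesis by (rule DERIV_cong_ev[THEN iffD2, OF refl e v Gf_deriv[OF z]])
  qed
qed


lemma Pd_anti:
  assumes "b\<^sup>2 \<le> x" "x \<le> y" "y \<le> c\<^sup>2"
  shows "Pd c q1 q2 y \<le> Pd c q1 q2 x" "0 \<le> Pd c q1 q2 y"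
proof -
  note a = admD
  have sx: "b \<le> sqrt x" using assms a real_le_rsqrt by auto
  have sxy: "sqrt x \<le> sqrt y" using assms by simp
  have sy: "sqrt y \<le> c" using assms a real_sqrt_le_iff[of y "c\<^sup>2"] by simp
  have Ty: "0 \<le> tanh (q2*(c - sqrt y))" using sy a by (simp add: tanh_real_nonneg_iff)
  have sxc: "sqrt x \<le> c" using sy sxy by linarith
  have Tx: "0 \<le> tanh (q2*(c - sqrt x))" using sxc a by (simp add: tanh_real_nonneg_iff)
  have xpos: "0 < x" using sx a by (smt (verit) real_sqrt_le_0_iff)
  have Txy: "tanh (q2*(c - sqrt y)) \<le> tanh (q2*(c - sqrt x))"
    using sxy a by (simp add: tanh_real_le_iff)
  have "q1 * tanh (q2*(c - sqrt y)) / (2 * sqrt y) \<le> q1 * tanh (q2*(c - sqrt x)) / (2 * sqrt x)"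
    apply (rule frac_le)
    using Ty Txy a sx sxy Tx xpos by (auto intro: mult_left_mono)
  then show "Pd c q1 q2 y \<le> Pd c q1 q2 x" by (simp add: Pd_def)
  have "0 \<le> q1 * tanh (q2*(c - sqrt y))" using Ty a(3) by (rule_tac mult_nonneg_nonneg) auto
  then show "0 \<le> Pd c q1 q2 y" unfolding Pd_def
    by (rule divide_nonneg_nonneg) (use assms in \<open>smt (verit) zero_le_power2 real_sqrt_ge_zero\<close>)
qed

lemma bc2: "b\<^sup>2 < c\<^sup>2" by (rule power_strict_mono) (use admD in auto)

lemma Hd_nonneg: "0 \<le> Hd b c q1 q2 z"
  using Pd_anti(2)[of z z] bc2 by (auto simp: Hd_def Gd_def)

lemma Hd_anti: "x \<le> y \<Longrightarrow> Hd b c q1 q2 y \<le> Hd b c q1 q2 x"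
proof -
  assume xy: "x \<le> y"
  have P1: "Pd c q1 q2 z \<le> 1/2" if "b\<^sup>2 < z" "z \<le> c\<^sup>2" for z
    using Pd_anti(1)[of "b\<^sup>2" z] Pd_b that by simp
  have P0: "0 \<le> Pd c q1 q2 z" if "b\<^sup>2 < z" "z \<le> c\<^sup>2" for z
    using Pd_anti(2)[of z z] that by simp
  have PA: "Pd c q1 q2 y \<le> Pd c q1 q2 x" if "b\<^sup>2 < x" "y \<le> c\<^sup>2"
    using Pd_anti(1)[of x y] that xy by simp
  show ?thesis
  proof (cases "y \<le> b\<^sup>2")
    case True
    then have "x \<le> b\<^sup>2" using xy by linarith
    then show ?thesis using True by (simp add: Hd_def)
  next
    case ny: False
    show ?thesis
    proof (cases "y \<le> c\<^sup>2")
      case yc: True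
      show ?thesis
      proof (cases "x \<le> b\<^sup>2")
        case True
        then show ?thesis using ny yc P1[of y] by (simp add: Hd_def Gd_def)
      next
        case False
        then show ?thesis using ny yc xy PA by (simp add: Hd_def Gd_def)
      qed
    next
      case yc: False
      have "0 \<le> Hd b c q1 q2 x" by (rule Hd_nonneg)
      then show ?thesis using ny yc by (simp add: Hd_def Gd_def)
    qed
  qed
qed

lemma Hf_concave: "concave_on UNIV (Hf b c q1 q2)"
  unfolding concave_on_def
proof (rule convex_on_realI[where f'="\<lambda>z. - Hd b c q1 q2 z"])
  show "connected (UNIV::real set)" by simp
  show "((\<lambda>x. - Hf b c q1 q2 x) has_real_derivative - Hd b c q1 q2 x) (at x)" for x
    by (rule DERIV_minus[OF Hf_deriv])
  show "- Hd b c q1 q2 x \<le> - Hd b c q1 q2 y" if "x \<le> y" for x y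
    using Hd_anti[OF that] by simp
qed

lemma Hf_mono: "x \<le> y \<Longrightarrow> Hf b c q1 q2 x \<le> Hf b c q1 q2 y"
  by (rule DERIV_nonneg_imp_nondecreasing) (use Hf_deriv Hd_nonneg in \<open>blast+\<close>)

lemma hfun_eq: "0 \<le> z \<Longrightarrow> hfun b c q1 q2 z = Hf b c q1 q2 z"
proof -
  assume z: "0 \<le> z"
  have e1: "sqrt z \<le> b \<longleftrightarrow> z \<le> b\<^sup>2" using admD real_sqrt_le_iff[of z "b\<^sup>2"] by simp
  have e2: "sqrt z \<le> c \<longleftrightarrow> z \<le> c\<^sup>2" using admD real_sqrt_le_iff[of z "c\<^sup>2"] by simp
  show ?thesis using z e1 e2
    by (simp add: hfun_def rho_def Hf_def Gf_def Pf_def)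
qed

lemma hfun_concave:
  assumes "0 \<le> x" "0 \<le> y" "0 \<le> u" "0 \<le> v" "u + v = 1"
  shows "u * hfun b c q1 q2 x + v * hfun b c q1 q2 y \<le> hfun b c q1 q2 (u * x + v * y)"
proof -
  have "(\<lambda>z. - Hf b c q1 q2 z) ((1 - v) *\<^sub>R x + v *\<^sub>R y) \<le> (1 - v) * (\<lambda>z. - Hf b c q1 q2 z) x + v * (\<lambda>z. - Hf b c q1 q2 z) y"
    by (rule convex_onD[OF Hf_concave[unfolded concave_on_def]]) (use assms in auto)
  moreover have "u = 1 - v" using assms by simp
  moreover have "0 \<le> u * x + v * y" using assms by simp
  ultimately have "u * Hf b c q1 q2 x + v * Hf b c q1 q2 y \<le> Hf b c q1 q2 (u * x + v * y)"
    by simp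
  then show ?thesis using assms by (simp add: hfun_eq)
qed

lemma hfun_mono: "0 \<le> x \<Longrightarrow> x \<le> y \<Longrightarrow> hfun b c q1 q2 x \<le> hfun b c q1 q2 y"
  using Hf_mono[of x y] by (simp add: hfun_eq)

lemma hfun_nonneg: "0 \<le> x \<Longrightarrow> 0 \<le> hfun b c q1 q2 x"
proof -
  have "hfun b c q1 q2 0 = 0" using admD by (simp add: hfun_def rho_def)
  then show "0 \<le> x \<Longrightarrow> 0 \<le> hfun b c q1 q2 x" using hfun_mono[of 0 x] by simp
qed

end

lemma sum_step:
  fixes w a bb cc :: "'a \<Rightarrow> real"
  assumes "\<And>j. 0 \<le> w j" "\<And>j. u * a j + v * bb j \<le> cc j"
  shows "u * (\<Sum>j\<in>A. w j * a j) + v * (\<Sum>j\<in>A. w j * bb j) \<le> (\<Sum>j\<in>A. w j * cc j)"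
proof -
  have "u * (\<Sum>j\<in>A. w j * a j) + v * (\<Sum>j\<in>A. w j * bb j) = (\<Sum>j\<in>A. w j * (u * a j + v * bb j))"
    by (simp add: sum_distrib_left sum.distrib algebra_simps)
  also have "\<dots> \<le> (\<Sum>j\<in>A. w j * cc j)"
    by (rule sum_mono) (use assms in \<open>simp add: mult_left_mono\<close>)
  finally show ?thesis .
qed

theorem lemma2:
  fixes M :: "real^'p^'n" and s1 :: "'p \<Rightarrow> real" and s2 :: real
    and b1 c1 q11 q12 b2 c2 q21 q22 :: real
  assumes M01: "\<forall>i j. M $ i $ j \<in> {0, 1}"
    and rows: "\<forall>i. (\<Sum>j\<in>UNIV. M $ i $ j) \<ge> 1"
    and s1_pos: "\<forall>j. s1 j > 0"
    and s2_pos: "s2 > 0"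
    and adm1: "rho_admissible b1 c1 q11 q12"
    and adm2: "rho_admissible b2 c2 q21 q22"
  shows "concave_on {f :: real^'p^'n. \<forall>i j. 0 \<le> f $ i $ j}
           (cellL (hfun b1 c1 q11 q12) (hfun b2 c2 q21 q22) M s1 s2)"
proof -
  let ?S = "{f :: real^'p^'n. \<forall>i j. 0 \<le> f $ i $ j}"
  let ?h1 = "hfun b1 c1 q11 q12"
  let ?h2 = "hfun b2 c2 q21 q22"
  define mi where "mi i = (\<Sum>j\<in>UNIV. M $ i $ j)" for i
  define m where "m = (\<Sum>i\<in>UNIV. mi i)"
  define G where "G f i = 1 / (mi i * s2\<^sup>2) * (\<Sum>j\<in>UNIV. M $ i $ j * (s1 j)\<^sup>2 * ?h1 (f $ i $ j / (s1 j)\<^sup>2))"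
    for f :: "real^'p^'n" and i
  have L: "cellL ?h1 ?h2 M s1 s2 f = s2\<^sup>2 / m * (\<Sum>i\<in>UNIV. mi i * ?h2 (G f i))" for f
    unfolding cellL_def Let_def mi_def m_def G_def ..
  have mi_pos: "mi i \<ge> 1" for i using rows mi_def by auto
  have m_pos: "m > 0"
  proof -
    have "(\<Sum>i\<in>(UNIV::'n set). (1::real)) \<le> m" unfolding m_def by (rule sum_mono) (use mi_pos in auto)
    then show ?thesis by simp (smt (verit) of_nat_0_less_iff card_gt_0_iff finite UNIV_not_empty)
  qed
  have w_nonneg: "0 \<le> M $ i $ j * (s1 j)\<^sup>2" for i j
  proof -
    have "0 \<le> M $ i $ j" using M01 by (metis insertE singletonD order_refl zero_le_one)
    then show ?thesis by simp
  qed
  have G_nonneg: "0 \<le> G f i" if "f \<in> ?S" for f i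
  proof -
    have "0 \<le> (\<Sum>j\<in>UNIV. M $ i $ j * (s1 j)\<^sup>2 * ?h1 (f $ i $ j / (s1 j)\<^sup>2))"
      by (rule sum_nonneg, rule mult_nonneg_nonneg[OF w_nonneg], rule hfun_nonneg[OF adm1])
         (use that s1_pos in auto)
    moreover have "0 \<le> 1 / (mi i * s2\<^sup>2)" using mi_pos[of i] by simp
    ultimately show ?thesis unfolding G_def by simp
  qed
  have convS: "convex ?S"
    unfolding convex_def by (auto intro!: add_nonneg_nonneg mult_nonneg_nonneg)
  show ?thesis unfolding concave_on_iff
  proof (intro conjI convS ballI allI impI)
    fix x y :: "real^'p^'n" and u v :: real
    assume x: "x \<in> ?S" and y: "y \<in> ?S" and u: "0 \<le> u" and v: "0 \<le> v" and uv: "u + v = 1"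
    define z where "z = u *\<^sub>R x + v *\<^sub>R y"
    have zS: "z \<in> ?S" using convS x y u v uv unfolding convex_def z_def by blast
    have zc: "z $ i $ j = u * x $ i $ j + v * y $ i $ j" for i j by (simp add: z_def)
    have e1: "u * ?h1 (x $ i $ j / (s1 j)\<^sup>2) + v * ?h1 (y $ i $ j / (s1 j)\<^sup>2) \<le> ?h1 (z $ i $ j / (s1 j)\<^sup>2)" for i j
    proof -
      have "z $ i $ j / (s1 j)\<^sup>2 = u * (x $ i $ j / (s1 j)\<^sup>2) + v * (y $ i $ j / (s1 j)\<^sup>2)"
        by (simp add: zc add_divide_distrib)
      moreover have "u * ?h1 (x $ i $ j / (s1 j)\<^sup>2) + v * ?h1 (y $ i $ j / (s1 j)\<^sup>2)
          \<le> ?h1 (u * (x $ i $ j / (s1 j)\<^sup>2) + v * (y $ i $ j / (s1 j)\<^sup>2))"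
        by (rule hfun_concave[OF adm1]) (use x y u v uv s1_pos in auto)
      ultimately show ?thesis by simp
    qed
    have e2: "u * G x i + v * G y i \<le> G z i" for i
    proof -
      have K: "0 \<le> 1 / (mi i * s2\<^sup>2)" using mi_pos[of i] by simp
      have "u * (\<Sum>j\<in>UNIV. M $ i $ j * (s1 j)\<^sup>2 * ?h1 (x $ i $ j / (s1 j)\<^sup>2))
          + v * (\<Sum>j\<in>UNIV. M $ i $ j * (s1 j)\<^sup>2 * ?h1 (y $ i $ j / (s1 j)\<^sup>2))
          \<le> (\<Sum>j\<in>UNIV. M $ i $ j * (s1 j)\<^sup>2 * ?h1 (z $ i $ j / (s1 j)\<^sup>2))"
        by (rule sum_step[where w="\<lambda>j. M $ i $ j * (s1 j)\<^sup>2"]) (use w_nonneg e1 in auto)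
      from mult_left_mono[OF this K] show ?thesis
        unfolding G_def by (simp add: algebra_simps)
    qed
    have e3: "u * ?h2 (G x i) + v * ?h2 (G y i) \<le> ?h2 (G z i)" for i
    proof -
      have "u * ?h2 (G x i) + v * ?h2 (G y i) \<le> ?h2 (u * G x i + v * G y i)"
        by (rule hfun_concave[OF adm2]) (use G_nonneg x y u v uv in auto)
      also have "\<dots> \<le> ?h2 (G z i)"
        by (rule hfun_mono[OF adm2]) (use G_nonneg x y u v e2 in auto)
      finally show ?thesis .
    qed
    have "u * (\<Sum>i\<in>UNIV. mi i * ?h2 (G x i)) + v * (\<Sum>i\<in>UNIV. mi i * ?h2 (G y i))
        \<le> (\<Sum>i\<in>UNIV. mi i * ?h2 (G z i))"
      by (rule sum_step) (use mi_pos e3 in \<open>auto intro: order_trans[OF zero_le_one]\<close>)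
    from mult_left_mono[OF this, of "s2\<^sup>2 / m"] m_pos
    show "u * cellL ?h1 ?h2 M s1 s2 x + v * cellL ?h1 ?h2 M s1 s2 y
        \<le> cellL ?h1 ?h2 M s1 s2 (u *\<^sub>R x + v *\<^sub>R y)"
      unfolding L z_def[symmetric] by (simp add: algebra_simps)
  qed
qed

end
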